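(* Let $\mathcal{G}$ be a simple temporal clique on $n$ vertices and let $\mathcal{T}^-=(V,E^-_T)$ be obtained by the forward construction (for any choice of the arbitrary choices). Then the number of emitters is at most $n/2$.
   Context: A simple temporal clique is a pair $\mathcal{G}=(G,\lambda)$ where $G=(V,E)$ is the complete graph on a finite set $V$ of $n$ vertices and $\lambda:E\to\mathbb{N}$ assigns to each edge a single integer label such that any two distinct edges sharing an endpoint have different labels; the label of an arc $(x,y)$ is $\lambda(\{x,y\})$. For a vertex $v$, $e^-(v)$ is the edge incident to $v$ with smallest label. Forward construction: let $E^-$ be the set of arcs $(u,v)$ with $\{u,v\}=e^-(v)$, except that if $e^-(u)=e^-(v)=\{u,v\}$ only one of the two arcs $(u,v),(v,u)$ is included (arbitrarily). Initialize $E^-_T:=E^-$. For every vertex $v$ of out-degree at least $2$ in $(V,E^-)$, let $(v,u_1),\dots,(v,u_\ell)$ be its out-arcs in $E^-$, where $(v,u_\ell)$ has the largest label; for each $i<\ell$, if $u_i$ has out-degree $0$ in $(V,E^-)$, replace $(v,u_i)$ by $(u_i,v)$ in $E^-_T$, and otherwise remove $(v,u_i)$ from $E^-_T$. Set $\mathcal{T}^-=(V,E^-_T)$. An emitter is a vertex of out-degree $0$ in $\mathcal{T}^-$. *)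

theory Defs
  imports Complex_Main
begin

definition simple_temporal_clique :: "'a set \<Rightarrow> ('a set \<Rightarrow> nat) \<Rightarrow> bool" where
  "simple_temporal_clique V lam \<longleftrightarrow> finite V \<and>
     (\<forall>u\<in>V. \<forall>v\<in>V. \<forall>w\<in>V. v \<noteq> u \<and> w \<noteq> u \<and> v \<noteq> w \<longrightarrow> lam {u,v} \<noteq> lam {u,w})"

text \<open>The other endpoint of e^-(v): the neighbour u of v minimising lam {v,u}, so e^-(v) = {v, mnb V lam v}.\<close>
definition mnb :: "'a set \<Rightarrow> ('a set \<Rightarrow> nat) \<Rightarrow> 'a \<Rightarrow> 'a" where
  "mnb V lam v = (ARG_MIN (\<lambda>u. lam {v,u}) u. u \<in> V \<and> u \<noteq> v)"

definition emin :: "'a set \<Rightarrow> ('a set \<Rightarrow> nat) \<Rightarrow> 'a \<Rightarrow> 'a set" where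
  "emin V lam v = {v, mnb V lam v}"

text \<open>Em is a legal choice of E^-: it consists of the arcs (u,v) with {u,v} = e^-(v), except that
  for a pair with e^-(u) = e^-(v) = {u,v} exactly one of (u,v), (v,u) is kept (arbitrary choice).\<close>
definition is_Eminus :: "'a set \<Rightarrow> ('a set \<Rightarrow> nat) \<Rightarrow> ('a \<times> 'a) set \<Rightarrow> bool" where
  "is_Eminus V lam Em \<longleftrightarrow>
     (\<forall>(u,v)\<in>Em. u \<in> V \<and> v \<in> V \<and> u \<noteq> v \<and> {u,v} = emin V lam v) \<and>
     (\<forall>u\<in>V. \<forall>v\<in>V. u \<noteq> v \<and> {u,v} = emin V lam v \<and> \<not> ({u,v} = emin V lam u) \<longrightarrow> (u,v) \<in> Em) \<and>
     (\<forall>u\<in>V. \<forall>v\<in>V. u \<noteq> v \<and> {u,v} = emin V lam v \<and> {u,v} = emin V lam u \<longrightarrow>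
         ((u,v) \<in> Em \<longleftrightarrow> (v,u) \<notin> Em))"

definition outdeg :: "('a \<times> 'a) set \<Rightarrow> 'a \<Rightarrow> nat" where
  "outdeg A v = card {u. (v,u) \<in> A}"

definition topnb :: "('a set \<Rightarrow> nat) \<Rightarrow> ('a \<times> 'a) set \<Rightarrow> 'a \<Rightarrow> 'a" where
  "topnb lam Em v = (ARG_MAX (\<lambda>u. lam {v,u}) u. (v,u) \<in> Em)"

text \<open>E^-_T of the forward construction: for every v of out-degree \<ge> 2 in (V,E^-), each out-arc
  (v,u) other than the largest-labelled one is reversed if u has out-degree 0 in (V,E^-), and
  removed otherwise.\<close>
definition ETminus :: "('a set \<Rightarrow> nat) \<Rightarrow> ('a \<times> 'a) set \<Rightarrow> ('a \<times> 'a) set" where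
  "ETminus lam Em =
     {(v,u). (v,u) \<in> Em \<and> (outdeg Em v < 2 \<or> u = topnb lam Em v)} \<union>
     {(u,v). (v,u) \<in> Em \<and> outdeg Em v \<ge> 2 \<and> u \<noteq> topnb lam Em v \<and> outdeg Em u = 0}"

definition emitters :: "'a set \<Rightarrow> ('a set \<Rightarrow> nat) \<Rightarrow> ('a \<times> 'a) set \<Rightarrow> 'a set" where
  "emitters V lam Em = {v \<in> V. outdeg (ETminus lam Em) v = 0}"

end

theory Submission
  imports Defs
begin

lemma argmax_mem:
  fixes f :: "'b \<Rightarrow> nat"
  assumes "finite S" "x \<in> S"
  shows "arg_max f (\<lambda>u. u \<in> S) \<in> S"
proof -
  have "\<forall>y. y \<in> S \<longrightarrow> f y < Suc (Max (f ` S))"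
    using assms by (simp add: le_imp_less_Suc)
  then show ?thesis using arg_max_natI[of "\<lambda>u. u \<in> S" x f] assms by blast
qed

lemma out_ET:
  assumes fin: "finite {u. (v,u) \<in> Em}" and e: "(v,w) \<in> Em"
  shows "\<exists>u. (v,u) \<in> ETminus lam Em"
proof (cases "outdeg Em v < 2")
  case True
  then show ?thesis using e unfolding ETminus_def by blast
next
  case False
  have "topnb lam Em v \<in> {u. (v,u) \<in> Em}"
    unfolding topnb_def using argmax_mem[OF fin, of w "\<lambda>u. lam {v,u}"] e by simp
  then show ?thesis unfolding ETminus_def by blast
qed

theorem lemma3:
  fixes V :: "'a set" and lam :: "'a set \<Rightarrow> nat" and Em :: "('a \<times> 'a) set"
  assumes "simple_temporal_clique V lam"
    and "card V \<ge> 2"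
    and "is_Eminus V lam Em"
  shows "real (card (emitters V lam Em)) \<le> real (card V) / 2"
proof -
  let ?E = "emitters V lam Em"
  let ?m = "mnb V lam"
  have finV: "finite V" using assms(1) unfolding simple_temporal_clique_def by simp
  have D: "(\<forall>(u,v)\<in>Em. u \<in> V \<and> v \<in> V \<and> u \<noteq> v \<and> {u,v} = emin V lam v) \<and>
     (\<forall>u\<in>V. \<forall>v\<in>V. u \<noteq> v \<and> {u,v} = emin V lam v \<and> \<not> ({u,v} = emin V lam u) \<longrightarrow> (u,v) \<in> Em) \<and>
     (\<forall>u\<in>V. \<forall>v\<in>V. u \<noteq> v \<and> {u,v} = emin V lam v \<and> {u,v} = emin V lam u \<longrightarrow>
         ((u,v) \<in> Em \<longleftrightarrow> (v,u) \<notin> Em))"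
    using assms(3) unfolding is_Eminus_def .
  note D1 = D[THEN conjunct1] and D2 = D[THEN conjunct2, THEN conjunct1] and D3 = D[THEN conjunct2, THEN conjunct2]
  have c1: "u \<in> V \<and> v \<in> V \<and> u \<noteq> v \<and> {u,v} = emin V lam v" if "(u,v) \<in> Em" for u v
    using bspec[OF D1 that] by simp
  have c2: "(u,v) \<in> Em" if "u \<in> V" "v \<in> V" "u \<noteq> v" "{u,v} = emin V lam v" "{u,v} \<noteq> emin V lam u" for u v
    apply (rule D2[rule_format, OF that(1,2)])
    using that(3-5) by (intro conjI)
  have c3: "(u,v) \<in> Em \<longleftrightarrow> (v,u) \<notin> Em" if "u \<in> V" "v \<in> V" "u \<noteq> v" "{u,v} = emin V lam v" "{u,v} = emin V lam u" for u v
    apply (rule D3[rule_format, OF that(1,2)])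
    using that(3-5) by (intro conjI)
  have EmV: "Em \<subseteq> V \<times> V" using c1 by auto
  have finout: "finite {u. (v,u) \<in> Em}" for v
    by (rule finite_subset[OF _ finV]) (use EmV in auto)
  have ETV: "ETminus lam Em \<subseteq> V \<times> V" unfolding ETminus_def using EmV by auto
  have finoutT: "finite {u. (v,u) \<in> ETminus lam Em}" for v
    by (rule finite_subset[OF _ finV]) (use ETV in auto)
  have EV: "?E \<subseteq> V" unfolding emitters_def by auto
  have noT: "(w,u) \<notin> ETminus lam Em" if "w \<in> ?E" for w u
    using that finoutT[of w] unfolding emitters_def outdeg_def by auto
  have noEm: "(w,u) \<notin> Em" if "w \<in> ?E" for w u
    using out_ET[OF finout, of w u lam] noT[OF that] by blast
  have outdeg0: "outdeg Em w = 0" if "w \<in> ?E" for w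
    using noEm[OF that] unfolding outdeg_def by simp
  have mprop: "?m v \<in> V \<and> ?m v \<noteq> v" if "v \<in> V" for v
  proof -
    have "card (V - {v}) = card V - 1" using that finV by (simp add: card_Diff_singleton)
    then have "card (V - {v}) \<noteq> 0" using assms(2) by linarith
    then have "V - {v} \<noteq> {}" by (metis card.empty)
    then obtain x where "x \<in> V - {v}" by blast
    then have "(\<lambda>u. u \<in> V \<and> u \<noteq> v) x" by simp
    then have "(\<lambda>u. u \<in> V \<and> u \<noteq> v) (arg_min (\<lambda>u. lam {v,u}) (\<lambda>u. u \<in> V \<and> u \<noteq> v))"
      by (rule arg_min_natI)
    then show ?thesis unfolding mnb_def by simp
  qed
  have parc: "(?m w, w) \<in> Em" if "w \<in> ?E" for w
  proof -
    have wV: "w \<in> V" using that EV by auto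
    have e1: "{?m w, w} = emin V lam w" unfolding emin_def by auto
    show ?thesis
    proof (cases "{?m w, w} = emin V lam (?m w)")
      case False
      show ?thesis by (rule c2[OF mprop[OF wV, THEN conjunct1] wV mprop[OF wV, THEN conjunct2] e1 False])
    next
      case True
      have "(?m w, w) \<in> Em \<longleftrightarrow> (w, ?m w) \<notin> Em"
        by (rule c3[OF mprop[OF wV, THEN conjunct1] wV mprop[OF wV, THEN conjunct2] e1 True])
      then show ?thesis using noEm[OF that, of "?m w"] by simp
    qed
  qed
  have mnotE: "?m w \<in> V - ?E" if "w \<in> ?E" for w
  proof -
    have "?m w \<notin> ?E" using parc[OF that] noEm[of "?m w" w] by blast
    moreover have "?m w \<in> V" using mprop[of w] that EV by blast
    ultimately show ?thesis by simp
  qed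
  have inj: "inj_on ?m ?E"
  proof (rule inj_onI, rule ccontr)
    fix w1 w2 assume w1: "w1 \<in> ?E" and w2: "w2 \<in> ?E" and eq: "?m w1 = ?m w2" and ne: "w1 \<noteq> w2"
    define v where "v = ?m w1"
    have a1: "(v, w1) \<in> Em" using parc[OF w1] v_def by simp
    have a2: "(v, w2) \<in> Em" using parc[OF w2] v_def eq by simp
    have "{w1, w2} \<subseteq> {u. (v,u) \<in> Em}" using a1 a2 by auto
    then have "card {w1,w2} \<le> outdeg Em v" unfolding outdeg_def using finout card_mono by metis
    then have od: "outdeg Em v \<ge> 2" using ne by simp
    obtain w where w: "w \<in> ?E" "(v,w) \<in> Em" "w \<noteq> topnb lam Em v"
    proof (cases "w1 = topnb lam Em v")
      case True
      then show ?thesis using that[OF w2 a2] ne by simp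
    next
      case False
      then show ?thesis using that[OF w1 a1] by simp
    qed
    then have "(w, v) \<in> ETminus lam Em" using od outdeg0[OF w(1)] w(2,3) unfolding ETminus_def by simp
    then show False using noT[OF w(1)] by blast
  qed
  have "card ?E \<le> card (V - ?E)"
    using card_inj_on_le[OF inj _ finite_Diff[OF finV]] mnotE by blast
  moreover have "card V = card ?E + card (V - ?E)"
    using card_Diff_subset[OF finite_subset[OF EV finV] EV] card_mono[OF finV EV] by simp
  ultimately show ?thesis by simp
qed

end
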